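(* For every sum-bucket game $\mathcal R$, every sequence of greedy moves starting from an arbitrary routing is finite and ends at a Nash-routing; in particular every sum-bucket game has a Nash-routing.
   Context: A routing game $(\mathbf N,G,\mathcal P)$: players $\{1,\dots,N\}$ ($N\ge1$), a finite graph $G$, and for each player $i$ a nonempty finite set $\mathcal P_i$ of paths (each with at least one edge) from $u_i$ to $v_i$; $\mathcal P=\bigcup_i\mathcal P_i$, $L=\max_{p\in\mathcal P}|p|$. A routing is $\mathbf p=[p_1,\dots,p_N]$ with $p_i\in\mathcal P_i$. Sum-bucket game: for $k=0,\dots,\lceil\lg L\rceil$ the bucket $B_k$ is the set of paths in $\mathcal P$ with length in $[2^k,2^{k+1})$, $B(q)$ is the bucket index of path $q$; normalized length $\overline D_q=2^{B(q)+1}-1$; $\overline C_{e,q}(\mathbf p)$ is the number of players $j$ with $e\in p_j$ and $B(p_j)=B(q)$; $\overline C_q(\mathbf p)=\max_{e\in q}\overline C_{e,q}(\mathbf p)$; player cost $pc_i(\mathbf p)=\overline C_{p_i}(\mathbf p)+\overline D_{p_i}$. A greedy move by player $i$ replaces $p_i$ by some $p_i'\in\mathcal P_i$ so that $pc_i$ strictly decreases, other paths unchanged. A Nash-routing is a routing from which no greedy move is possible. *)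

theory Defs
  imports Main
begin

fun walk :: "('e \<Rightarrow> 'v \<times> 'v) \<Rightarrow> 'v \<Rightarrow> 'e list \<Rightarrow> 'v \<Rightarrow> bool" where
  "walk ends u [] v = (u = v)"
| "walk ends u (e # es) v =
     (\<exists>w. (ends e = (u, w) \<or> ends e = (w, u)) \<and> walk ends w es v)"

definition is_path :: "'v set \<Rightarrow> 'e set \<Rightarrow> ('e \<Rightarrow> 'v \<times> 'v) \<Rightarrow> 'v \<Rightarrow> 'v \<Rightarrow> 'e list \<Rightarrow> bool" where
  "is_path V E ends u v p \<longleftrightarrow> p \<noteq> [] \<and> set p \<subseteq> E \<and> u \<in> V \<and> v \<in> V
     \<and> (\<forall>e\<in>E. fst (ends e) \<in> V \<and> snd (ends e) \<in> V) \<and> walk ends u p v"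

definition bucket :: "'e list \<Rightarrow> nat" where
  "bucket q = (THE k. 2 ^ k \<le> length q \<and> length q < 2 ^ (k + 1))"

definition norm_len :: "'e list \<Rightarrow> nat" where
  "norm_len q = 2 ^ (bucket q + 1) - 1"

text \<open>Routings: functions from players {1..N} to paths (values outside {1..N} are irrelevant).\<close>
definition is_routing :: "nat \<Rightarrow> (nat \<Rightarrow> 'e list set) \<Rightarrow> (nat \<Rightarrow> 'e list) \<Rightarrow> bool" where
  "is_routing N P r \<longleftrightarrow> (\<forall>i\<in>{1..N}. r i \<in> P i)"

definition edge_cong :: "nat \<Rightarrow> (nat \<Rightarrow> 'e list) \<Rightarrow> 'e \<Rightarrow> 'e list \<Rightarrow> nat" where
  "edge_cong N r e q = card {j \<in> {1..N}. e \<in> set (r j) \<and> bucket (r j) = bucket q}"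

definition path_cong :: "nat \<Rightarrow> (nat \<Rightarrow> 'e list) \<Rightarrow> 'e list \<Rightarrow> nat" where
  "path_cong N r q = Max ((\<lambda>e. edge_cong N r e q) ` set q)"

definition player_cost :: "nat \<Rightarrow> (nat \<Rightarrow> 'e list) \<Rightarrow> nat \<Rightarrow> nat" where
  "player_cost N r i = path_cong N r (r i) + norm_len (r i)"

definition greedy_move :: "nat \<Rightarrow> (nat \<Rightarrow> 'e list set) \<Rightarrow> (nat \<Rightarrow> 'e list) \<Rightarrow> (nat \<Rightarrow> 'e list) \<Rightarrow> bool" where
  "greedy_move N P r r' \<longleftrightarrow>
     (\<exists>i\<in>{1..N}. \<exists>p\<in>P i. r' = r(i := p) \<and> player_cost N r' i < player_cost N r i)"

definition nash_routing :: "nat \<Rightarrow> (nat \<Rightarrow> 'e list set) \<Rightarrow> (nat \<Rightarrow> 'e list) \<Rightarrow> bool" where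
  "nash_routing N P r \<longleftrightarrow> is_routing N P r \<and> \<not> (\<exists>r'. greedy_move N P r r')"

end

theory Submission
  imports Defs "HOL-Library.Multiset"
begin

lemma norm_len_bucket: "bucket p = bucket q \<Longrightarrow> norm_len p = norm_len q"
  by (simp add: norm_len_def)

lemma cost_change:
  assumes i: "i \<in> {1..N}" and r': "r' = r(i := p)"
    and dec: "player_cost N r' i < player_cost N r i"
    and j: "j \<noteq> i"
  shows "player_cost N r' j \<le> player_cost N r j \<or> player_cost N r' j < player_cost N r i"
proof -
  define q where "q = r j"
  have qj: "r' j = q" using r' j q_def by simp
  have ri: "r' i = p" using r' by simp
  show ?thesis
  proof (cases "set q = {}")
    case True
    then show ?thesis by (simp add: player_cost_def path_cong_def qj q_def)
  next
    case False
    have fin: "finite ((\<lambda>e. edge_cong N r' e q) ` set q)" by simp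
    obtain e where e: "e \<in> set q" and em: "path_cong N r' q = edge_cong N r' e q"
      unfolding path_cong_def using Max_in[OF fin] False by fastforce
    show ?thesis
    proof (cases "e \<in> set p \<and> bucket p = bucket q")
      case True
      have "edge_cong N r' e q = edge_cong N r' e p"
        using True by (simp add: edge_cong_def)
      also have "\<dots> \<le> path_cong N r' p"
        unfolding path_cong_def using True by (intro Max_ge) auto
      finally have "player_cost N r' j \<le> player_cost N r' i"
        using norm_len_bucket[OF conjunct2[OF True]] em
        by (simp add: player_cost_def qj ri)
      then show ?thesis using dec by simp
    next
      case False
      have sub: "{k \<in> {1..N}. e \<in> set (r' k) \<and> bucket (r' k) = bucket q}
          \<subseteq> {k \<in> {1..N}. e \<in> set (r k) \<and> bucket (r k) = bucket q}"
        using False r' by auto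
      have "edge_cong N r' e q \<le> edge_cong N r e q"
        unfolding edge_cong_def by (rule card_mono[OF _ sub]) simp
      also have "\<dots> \<le> path_cong N r q"
        unfolding path_cong_def using e by (intro Max_ge) auto
      finally show ?thesis using em
        by (simp add: player_cost_def qj q_def)
    qed
  qed
qed

definition Phi :: "nat \<Rightarrow> (nat \<Rightarrow> 'e list) \<Rightarrow> nat multiset" where
  "Phi N r = image_mset (\<lambda>j. player_cost N r j) (mset_set {1..N})"

lemma move_decreases:
  assumes "greedy_move N P r r'"
  shows "(Phi N r', Phi N r) \<in> mult {(x, y). x < y}"
proof -
  obtain i p where i: "i \<in> {1..N}" and r': "r' = r(i := p)"
    and dec: "player_cost N r' i < player_cost N r i"
    using assms unfolding greedy_move_def by blast
  define T where "T = {j \<in> {1..N}. player_cost N r' j \<noteq> player_cost N r j}"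
  define S where "S = {1..N} - T"
  have iT: "i \<in> T" using i dec T_def by simp
  have split: "mset_set {1..N} = mset_set S + mset_set T"
    unfolding S_def T_def by (subst mset_set_Union[symmetric]) (auto intro: arg_cong[where f=mset_set])
  have eqS: "image_mset (player_cost N r') (mset_set S) = image_mset (player_cost N r) (mset_set S)"
    by (rule image_mset_cong) (auto simp: S_def T_def)
  have "(image_mset (player_cost N r) (mset_set S) + image_mset (player_cost N r') (mset_set T),
         image_mset (player_cost N r) (mset_set S) + image_mset (player_cost N r) (mset_set T))
        \<in> mult {(x, y). x < y}"
  proof (rule one_step_implies_mult)
    show "image_mset (player_cost N r) (mset_set T) \<noteq> {#}"
    proof -
      have "finite T" by (simp add: T_def)
      then show ?thesis using iT by (auto simp: mset_set_empty_iff)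
    qed
    show "\<forall>k\<in>#image_mset (player_cost N r') (mset_set T).
          \<exists>j\<in>#image_mset (player_cost N r) (mset_set T). (k, j) \<in> {(x, y). x < y}"
    proof
      fix k assume "k \<in># image_mset (player_cost N r') (mset_set T)"
      then obtain t where t: "t \<in> T" and k: "k = player_cost N r' t"
        by (auto simp: T_def)
      have fT: "finite T" by (simp add: T_def)
      show "\<exists>j\<in>#image_mset (player_cost N r) (mset_set T). (k, j) \<in> {(x, y). x < y}"
      proof (cases "t = i")
        case True
        then show ?thesis using iT fT k dec by auto
      next
        case False
        from cost_change[OF i r' dec False]
        have "player_cost N r' t < player_cost N r t \<or> player_cost N r' t < player_cost N r i"
          using t T_def by auto
        then show ?thesis using iT t fT k by auto
      qed
    qed
  qed
  then show ?thesis unfolding Phi_def split image_mset_union eqS .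
qed

lemma wf_greedy: "wf {(r', r). greedy_move N P r r'}"
proof -
  have "{(r', r). greedy_move N P r r'} \<subseteq> inv_image (mult {(x, y::nat). x < y}) (Phi N)"
    using move_decreases by auto
  moreover have "wf (inv_image (mult {(x, y::nat). x < y}) (Phi N))"
    by (intro wf_inv_image wf_mult wf_less)
  ultimately show ?thesis by (rule wf_subset[rotated])
qed

lemma move_routing: "greedy_move N P r r' \<Longrightarrow> is_routing N P r \<Longrightarrow> is_routing N P r'"
  unfolding greedy_move_def is_routing_def by auto

theorem mainTheorem10:
  fixes N :: nat and V :: "'v set" and E :: "'e set" and ends :: "'e \<Rightarrow> 'v \<times> 'v"
    and u v :: "nat \<Rightarrow> 'v" and P :: "nat \<Rightarrow> 'e list set"
  assumes "N \<ge> 1" and "finite V" and "finite E"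
    and "\<forall>i\<in>{1..N}. finite (P i) \<and> P i \<noteq> {} \<and> (\<forall>p\<in>P i. is_path V E ends (u i) (v i) p)"
  shows "(\<nexists>f. is_routing N P (f 0) \<and> (\<forall>n. greedy_move N P (f n) (f (Suc n))))
     \<and> (\<forall>r. is_routing N P r \<longrightarrow>
           (\<exists>r'. (greedy_move N P)\<^sup>*\<^sup>* r r' \<and> nash_routing N P r'))
     \<and> (\<exists>r. nash_routing N P r)"
proof -
  have A: "\<nexists>f. is_routing N P (f 0) \<and> (\<forall>n. greedy_move N P (f n) (f (Suc n)))"
    using wf_greedy[of N P] unfolding wf_iff_no_infinite_down_chain by auto
  have B: "\<forall>r. is_routing N P r \<longrightarrow> (\<exists>r'. (greedy_move N P)\<^sup>*\<^sup>* r r' \<and> nash_routing N P r')"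
  proof
    fix r
    show "is_routing N P r \<longrightarrow> (\<exists>r'. (greedy_move N P)\<^sup>*\<^sup>* r r' \<and> nash_routing N P r')"
      using wf_greedy[of N P]
    proof (induction r rule: wf_induct_rule)
      case (less r)
      show ?case
      proof
        assume R: "is_routing N P r"
        show "\<exists>r'. (greedy_move N P)\<^sup>*\<^sup>* r r' \<and> nash_routing N P r'"
        proof (cases "\<exists>r'. greedy_move N P r r'")
          case False
          then show ?thesis using R by (auto simp: nash_routing_def)
        next
          case True
          then obtain r1 where m: "greedy_move N P r r1" by blast
          with less.IH[of r1] move_routing[OF m R] obtain r2 where
            "(greedy_move N P)\<^sup>*\<^sup>* r1 r2" "nash_routing N P r2" by auto
          then show ?thesis using m by (meson converse_rtranclp_into_rtranclp)
        qed
      qed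
    qed
  qed
  have "is_routing N P (\<lambda>i. SOME p. p \<in> P i)"
    using assms(4) unfolding is_routing_def by (metis ex_in_conv someI_ex)
  then have C: "\<exists>r. nash_routing N P r" using B by blast
  show ?thesis using A B C by blast
qed

end
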